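(* In the PIR-PSI under a storage constraint model described in the context, fix a realization $h$ of the cached index set, with messages labelled so that $h=\{1,\dots,M\}$ and the first $Lr_i$ symbols of $W_i$ are cached for $i=1,\dots,M$; set $r_k=0$ for $k>M$. Then for every $k\in\{1,\dots,K-1\}$, $$I\big(W_{1:k};Q_{1:N}^{[k+1,h]},A_{1:N}^{[k+1,h]}\,\big|\,\mathcal{W}_h,W_{k+1:K}\big)\ \ge\ \frac1N\, I\big(W_{1:k-1};Q_{1:N}^{[k,h]},A_{1:N}^{[k,h]}\,\big|\,\mathcal{W}_h,W_{k:K}\big)+\frac{L}{N}(1-r_k)-o(L).$$
   Context: Model: $N$ non-communicating databases each store the same $K$ independent messages $W_1,\dots,W_K$, $H(W_k)=L$, jointly independent. The user accesses an index set $h\subset[K]$, $|h|=M$, and caches the first $Lr_i$ symbols of the $i$-th accessed message, $\sum_{i=1}^M r_i=S$; $\mathcal{W}_h$ denotes the cached content. For desired index $\theta$, queries $Q_n^{[\theta,h]}$, $n\in[N]$, are independent of $W_{1:K}$; answers satisfy $H(A_n^{[\theta,h]}\mid Q_n^{[\theta,h]},W_{1:K})=0$; reliability: $H(W_\theta\mid\mathcal{W}_h,Q_{1:N}^{[\theta,h]},A_{1:N}^{[\theta,h]})=o(L)$ where $o(L)/L\to0$ as $L\to\infty$; privacy: for each database $n$, $(Q_n^{[\theta,h]},A_n^{[\theta,h]},W_{1:K})$ has the same distribution for all $\theta\in[K]$ and all $M$-subsets $h$. Notation $X_{a:b}=(X_a,\dots,X_b)$, with $W_{1:0}$ empty. 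*)

theory Defs
  imports "HOL-Probability.Probability" "HOL-Library.Landau_Symbols"
begin

text \<open>These are exactly the library abbreviations entropy_Pow, conditional_entropy_Pow
  and conditional_mutual_information_Pow of the locale information_space, written
  as global functions so that the probability space may depend on the message length L.\<close>

definition ent :: "'a measure \<Rightarrow> real \<Rightarrow> ('a \<Rightarrow> 'x) \<Rightarrow> real" where
  "ent Mm b X = prob_space.entropy Mm b (count_space (X ` space Mm)) X"

definition cent :: "'a measure \<Rightarrow> real \<Rightarrow> ('a \<Rightarrow> 'x) \<Rightarrow> ('a \<Rightarrow> 'y) \<Rightarrow> real" where
  "cent Mm b X Y = prob_space.conditional_entropy Mm b
     (count_space (X ` space Mm)) (count_space (Y ` space Mm)) X Y"

definition cmi :: "'a measure \<Rightarrow> real \<Rightarrow> ('a \<Rightarrow> 'x) \<Rightarrow> ('a \<Rightarrow> 'y) \<Rightarrow> ('a \<Rightarrow> 'z) \<Rightarrow> real" where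
  "cmi Mm b X Y Z = prob_space.conditional_mutual_information Mm b
     (count_space (X ` space Mm)) (count_space (Y ` space Mm)) (count_space (Z ` space Mm)) X Y Z"

text \<open>W_{a:b} as a list (empty if b < a).  W L j \<omega> is the j-th message (a list of symbols)
  for message length L.\<close>
definition msgs :: "(nat \<Rightarrow> nat \<Rightarrow> 'a \<Rightarrow> 'w) \<Rightarrow> nat \<Rightarrow> nat \<Rightarrow> nat \<Rightarrow> 'a \<Rightarrow> 'w list" where
  "msgs W L a b = (\<lambda>\<omega>. map (\<lambda>j. W L j \<omega>) [a..<Suc b])"

definition qlist :: "(nat \<Rightarrow> nat \<Rightarrow> nat set \<Rightarrow> nat \<Rightarrow> 'a \<Rightarrow> 'q) \<Rightarrow> nat \<Rightarrow> nat \<Rightarrow> nat set \<Rightarrow> nat \<Rightarrow> 'a \<Rightarrow> 'q list" where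
  "qlist Q L \<theta> h N = (\<lambda>\<omega>. map (\<lambda>n. Q L \<theta> h n \<omega>) [1..<Suc N])"

definition cache :: "(nat \<Rightarrow> nat \<Rightarrow> 'a \<Rightarrow> 's list) \<Rightarrow> (nat \<Rightarrow> real) \<Rightarrow> nat \<Rightarrow> nat \<Rightarrow> 'a \<Rightarrow> 's list list" where
  "cache W r M L = (\<lambda>\<omega>. map (\<lambda>i. take (nat \<lfloor>real L * r i\<rfloor>) (W L i \<omega>)) [1..<Suc M])"

end

theory Submission
  imports Defs
begin


context information_space
begin

lemma ent_is: "ent M b X = \<H>(X)"
  unfolding ent_def ..

lemma ent_sum:
  assumes X: "simple_function M X"
  shows "ent M b X = - (\<Sum>x\<in>X`space M. prob (X -` {x} \<inter> space M) * log b (prob (X -` {x} \<inter> space M)))"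
  unfolding ent_is
  by (rule entropy_simple_distributed[OF simple_distributedI[OF X measure_nonneg refl]])

lemma entropy_superset:
  assumes X: "simple_function M X" and A: "X`space M \<subseteq> A" "finite A"
  shows "entropy b (count_space A) X = ent M b X"
proof -
  let ?P = "\<lambda>x. prob (X -` {x} \<inter> space M)"
  let ?P' = "\<lambda>x. if x \<in> X`space M then ?P x else 0"
  have D: "distributed M (count_space A) X ?P'"
    by (rule distributed_simple_function_superset[OF X refl A])
  have "entropy b (count_space A) X = - (\<integral>x. ?P' x * log b (?P' x) \<partial>count_space A)"
    by (rule entropy_distr[OF D]) (auto simp: measure_nonneg)
  also have "\<dots> = - (\<Sum>x\<in>A. ?P' x * log b (?P' x))"
    using A by (simp add: lebesgue_integral_count_space_finite)
  also have "\<dots> = - (\<Sum>x\<in>X`space M. ?P x * log b (?P x))"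
  proof -
    have "(\<Sum>x\<in>A. ?P' x * log b (?P' x)) = (\<Sum>x\<in>X`space M. ?P' x * log b (?P' x))"
      using A by (intro sum.mono_neutral_right) auto
    then show ?thesis by simp
  qed
  finally show ?thesis using ent_sum[OF X] by simp
qed

lemma mi_superset:
  assumes X: "simple_function M X" and Y: "simple_function M Y"
    and A: "X`space M \<subseteq> A" "finite A" and B: "Y`space M \<subseteq> B" "finite B"
  shows "mutual_information b (count_space A) (count_space B) X Y
     = ent M b X + ent M b Y - ent M b (\<lambda>x. (X x, Y x))"
proof -
  let ?Px = "\<lambda>x. if x \<in> X`space M then prob (X -` {x} \<inter> space M) else 0"
  let ?Py = "\<lambda>x. if x \<in> Y`space M then prob (Y -` {x} \<inter> space M) else 0"
  let ?Pxy = "\<lambda>x. if x \<in> (\<lambda>x. (X x, Y x))`space M then prob ((\<lambda>x. (X x, Y x)) -` {x} \<inter> space M) else 0"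
  have XY: "simple_function M (\<lambda>x. (X x, Y x))" using X Y by simp
  have AB: "count_space A \<Otimes>\<^sub>M count_space B = count_space (A \<times> B)"
    using A B by (simp add: pair_measure_count_space)
  have ABs: "(\<lambda>x. (X x, Y x))`space M \<subseteq> A \<times> B" using A B by auto
  have "mutual_information b (count_space A) (count_space B) X Y =
     entropy b (count_space A) X + entropy b (count_space B) Y - entropy b (count_space A \<Otimes>\<^sub>M count_space B) (\<lambda>x. (X x, Y x))"
    apply (rule mutual_information_eq_entropy_conditional_entropy_distr)
    apply (rule sigma_finite_measure_count_space_finite, rule A)
    apply (rule sigma_finite_measure_count_space_finite, rule B)
    apply (rule distributed_simple_function_superset[OF X refl A])
    apply (simp add: measure_nonneg)
    apply (rule distributed_simple_function_superset[OF Y refl B])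
    apply (simp add: measure_nonneg)
    apply (unfold AB)
    apply (rule distributed_simple_function_superset[OF XY refl ABs])
    using A B apply (simp_all add: measure_nonneg integrable_count_space)
    done
  also have "\<dots> = ent M b X + ent M b Y - ent M b (\<lambda>x. (X x, Y x))"
    unfolding AB using entropy_superset[OF X A] entropy_superset[OF Y B] entropy_superset[OF XY ABs] A B
    by simp
  finally show ?thesis .
qed

lemma cmi_ent:
  assumes X: "simple_function M X" and Y: "simple_function M Y" and Z: "simple_function M Z"
  shows "cmi M b X Y Z = ent M b (\<lambda>x. (X x, Z x)) + ent M b (\<lambda>x. (Y x, Z x))
            - ent M b (\<lambda>x. (X x, Y x, Z x)) - ent M b Z"
proof -
  have fX: "finite (X`space M)" and fY: "finite (Y`space M)" and fZ: "finite (Z`space M)"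
    using X Y Z by (auto simp: simple_functionD)
  have YZ: "count_space (Y`space M) \<Otimes>\<^sub>M count_space (Z`space M) = count_space (Y`space M \<times> Z`space M)"
    using fY fZ by (simp add: pair_measure_count_space)
  have "cmi M b X Y Z = mutual_information b (count_space (X`space M)) (count_space (Y`space M \<times> Z`space M)) X (\<lambda>x. (Y x, Z x))
     - mutual_information b (count_space (X`space M)) (count_space (Z`space M)) X Z"
    unfolding cmi_def conditional_mutual_information_def YZ ..
  also have "\<dots> = (ent M b X + ent M b (\<lambda>x. (Y x, Z x)) - ent M b (\<lambda>x. (X x, Y x, Z x)))
      - (ent M b X + ent M b Z - ent M b (\<lambda>x. (X x, Z x)))"
    using fX fY fZ X Y Z
    by (subst mi_superset, auto)+
  finally show ?thesis by simp
qed

lemma cent_ent: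
  assumes X: "simple_function M X" and Y: "simple_function M Y"
  shows "cent M b X Y = ent M b (\<lambda>x. (X x, Y x)) - ent M b Y"
proof -
  have fX: "finite (X`space M)" and fY: "finite (Y`space M)"
    using X Y by (auto simp: simple_functionD)
  have XY: "count_space (X`space M) \<Otimes>\<^sub>M count_space (Y`space M) = count_space (X`space M \<times> Y`space M)"
    using fX fY by (simp add: pair_measure_count_space)
  show ?thesis
    unfolding cent_def conditional_entropy_eq_entropy_simple[OF X Y] XY ent_is[symmetric]
    using fX fY X Y by (subst entropy_superset) auto
qed

end


lemma sf_map:
  assumes "\<And>i. i \<in> set xs \<Longrightarrow> simple_function M (F i)"
  shows "simple_function M (\<lambda>\<omega>. map (\<lambda>i. F i \<omega>) xs)"
  using assms
proof (induction xs)
  case Nil then show ?case by simp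
next
  case (Cons x xs)
  have "simple_function M (\<lambda>\<omega>. F x \<omega> # map (\<lambda>i. F i \<omega>) xs)"
    by (rule simple_function_compose2[where h="(#)"]) (use Cons in auto)
  then show ?case by simp
qed

context information_space
begin

lemma ent_eq:
  assumes Y: "simple_function M Y"
    and f: "\<And>\<omega>. \<omega> \<in> space M \<Longrightarrow> X \<omega> = f (Y \<omega>)"
    and g: "\<And>\<omega>. \<omega> \<in> space M \<Longrightarrow> Y \<omega> = g (X \<omega>)"
  shows "ent M b X = ent M b Y"
proof -
  have X: "simple_function M X"
    using simple_function_compose1[OF Y, of f] f by (subst simple_function_cong) auto
  have img: "X`space M = f ` Y`space M" using f by (auto simp: image_iff)
  have gf: "g (f (Y \<omega>)) = Y \<omega>" if "\<omega> \<in> space M" for \<omega>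
    using f[OF that] g[OF that] by simp
  have inj: "inj_on f (Y`space M)"
  proof (rule inj_onI)
    fix u v assume "u \<in> Y`space M" "v \<in> Y`space M" "f u = f v"
    then obtain a c where "a \<in> space M" "c \<in> space M" "u = Y a" "v = Y c" by blast
    then show "u = v" using gf \<open>f u = f v\<close> by metis
  qed
  have pre: "X -` {f y} \<inter> space M = Y -` {y} \<inter> space M" if y: "y \<in> Y`space M" for y
  proof -
    have "X \<omega> = f y \<longleftrightarrow> Y \<omega> = y" if "\<omega> \<in> space M" for \<omega>
      using f[OF that] inj_on_eq_iff[OF inj, of "Y \<omega>" y] y that by auto
    then show ?thesis by auto
  qed
  show ?thesis
    unfolding ent_sum[OF X] ent_sum[OF Y] img
    by (subst sum.reindex[OF inj]) (simp add: pre)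
qed

lemma ent_cong:
  assumes Y: "simple_function M Y"
    and f: "\<And>\<omega>. \<omega> \<in> space M \<Longrightarrow> X \<omega> = Y \<omega>"
  shows "ent M b X = ent M b Y"
  by (rule ent_eq[OF Y, where f=id and g=id]) (auto simp: f)

lemma submod:
  assumes X: "simple_function M X" and Y: "simple_function M Y" and Z: "simple_function M Z"
  shows "ent M b (\<lambda>x. (X x, Y x, Z x)) + ent M b Z \<le> ent M b (\<lambda>x. (X x, Z x)) + ent M b (\<lambda>x. (Y x, Z x))"
  using conditional_mutual_information_nonneg[OF X Y Z] cmi_ent[OF X Y Z]
  unfolding cmi_def by simp

lemma subadd:
  assumes X: "simple_function M X" and Y: "simple_function M Y"
  shows "ent M b (\<lambda>x. (X x, Y x)) \<le> ent M b X + ent M b Y"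
  using mutual_information_nonneg_simple[OF X Y] mutual_information_eq_entropy_conditional_entropy[OF X Y]
    cent_ent[OF X Y]
  unfolding cent_def ent_is by simp

lemma cent_nonneg:
  assumes X: "simple_function M X" and Y: "simple_function M Y"
  shows "ent M b Y \<le> ent M b (\<lambda>x. (X x, Y x))"
  using conditional_entropy_nonneg[OF X Y] cent_ent[OF X Y] unfolding cent_def by simp

lemma cond_mono:
  assumes X: "simple_function M X" and U: "simple_function M U"
    and f: "\<And>\<omega>. \<omega> \<in> space M \<Longrightarrow> V \<omega> = f (U \<omega>)"
  shows "ent M b (\<lambda>x. (X x, U x)) - ent M b U \<le> ent M b (\<lambda>x. (X x, V x)) - ent M b V"
proof -
  have V: "simple_function M V"
    using simple_function_compose1[OF U, of f] f by (subst simple_function_cong) auto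
  have s: "ent M b (\<lambda>x. (X x, U x, V x)) + ent M b V \<le> ent M b (\<lambda>x. (X x, V x)) + ent M b (\<lambda>x. (U x, V x))"
    by (rule submod[OF X U V])
  have e1: "ent M b (\<lambda>x. (X x, U x, V x)) = ent M b (\<lambda>x. (X x, U x))"
    by (rule ent_eq[where f="\<lambda>(x,u). (x,u,f u)" and g="\<lambda>(x,u,v). (x,u)"]) (use X U f in auto)
  have e2: "ent M b (\<lambda>x. (U x, V x)) = ent M b U"
    by (rule ent_eq[where f="\<lambda>u. (u,f u)" and g="fst"]) (use X U f in auto)
  show ?thesis using s e1 e2 by simp
qed

lemma ent_const: "ent M b (\<lambda>x. c) = 0"
proof -
  have "(\<lambda>x. c) ` space M = {c}" using not_empty by auto
  moreover have "(\<lambda>x. c) -` {c} \<inter> space M = space M" by auto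
  ultimately show ?thesis by (simp add: ent_sum prob_space)
qed

lemma ent_indep_pt:
  assumes V: "simple_function M V" and U: "simple_function M U"
    and ind: "\<And>x y. prob ((\<lambda>\<omega>. (V \<omega>, U \<omega>)) -` {(x,y)} \<inter> space M)
                = prob (V -` {x} \<inter> space M) * prob (U -` {y} \<inter> space M)"
  shows "ent M b (\<lambda>\<omega>. (V \<omega>, U \<omega>)) = ent M b V + ent M b U"
proof -
  let ?p = "\<lambda>x. prob (V -` {x} \<inter> space M)"
  let ?q = "\<lambda>y. prob (U -` {y} \<inter> space M)"
  let ?S = "V`space M" and ?T = "U`space M"
  have VU: "simple_function M (\<lambda>\<omega>. (V \<omega>, U \<omega>))" using V U by simp
  have fS: "finite ?S" and fT: "finite ?T" using V U by (auto simp: simple_functionD)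
  have sp: "sum ?p ?S = 1"
    by (rule simple_distributed_sum_space[OF simple_distributedI[OF V measure_nonneg refl]])
  have sq: "sum ?q ?T = 1"
    by (rule simple_distributed_sum_space[OF simple_distributedI[OF U measure_nonneg refl]])
  have key: "?p x * ?q y * log b (?p x * ?q y) = ?p x * ?q y * log b (?p x) + ?p x * ?q y * log b (?q y)" for x y
  proof (cases "?p x = 0 \<or> ?q y = 0")
    case True then show ?thesis by auto
  next
    case False
    then have "?p x > 0" "?q y > 0"
      by (metis less_eq_real_def measure_nonneg)+
    then show ?thesis by (simp add: log_mult distrib_left)
  qed
  have "ent M b (\<lambda>\<omega>. (V \<omega>, U \<omega>)) = - (\<Sum>z\<in>(\<lambda>\<omega>. (V \<omega>, U \<omega>))`space M.
        prob ((\<lambda>\<omega>. (V \<omega>, U \<omega>)) -` {z} \<inter> space M) * log b (prob ((\<lambda>\<omega>. (V \<omega>, U \<omega>)) -` {z} \<inter> space M)))"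
    by (rule ent_sum[OF VU])
  also have "\<dots> = - (\<Sum>z\<in>?S \<times> ?T.
        prob ((\<lambda>\<omega>. (V \<omega>, U \<omega>)) -` {z} \<inter> space M) * log b (prob ((\<lambda>\<omega>. (V \<omega>, U \<omega>)) -` {z} \<inter> space M)))"
  proof -
    have "(\<Sum>z\<in>(\<lambda>\<omega>. (V \<omega>, U \<omega>))`space M.
        prob ((\<lambda>\<omega>. (V \<omega>, U \<omega>)) -` {z} \<inter> space M) * log b (prob ((\<lambda>\<omega>. (V \<omega>, U \<omega>)) -` {z} \<inter> space M)))
       = (\<Sum>z\<in>?S \<times> ?T.
        prob ((\<lambda>\<omega>. (V \<omega>, U \<omega>)) -` {z} \<inter> space M) * log b (prob ((\<lambda>\<omega>. (V \<omega>, U \<omega>)) -` {z} \<inter> space M)))"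
    proof (rule sum.mono_neutral_left)
      show "finite (?S \<times> ?T)" using fS fT by simp
      show "(\<lambda>\<omega>. (V \<omega>, U \<omega>))`space M \<subseteq> ?S \<times> ?T" by auto
      show "\<forall>z\<in>?S \<times> ?T - (\<lambda>\<omega>. (V \<omega>, U \<omega>))`space M.
        prob ((\<lambda>\<omega>. (V \<omega>, U \<omega>)) -` {z} \<inter> space M) * log b (prob ((\<lambda>\<omega>. (V \<omega>, U \<omega>)) -` {z} \<inter> space M)) = 0"
      proof
        fix z assume "z \<in> ?S \<times> ?T - (\<lambda>\<omega>. (V \<omega>, U \<omega>))`space M"
        then have "(\<lambda>\<omega>. (V \<omega>, U \<omega>)) -` {z} \<inter> space M = {}" by blast
        then show "prob ((\<lambda>\<omega>. (V \<omega>, U \<omega>)) -` {z} \<inter> space M) * log b (prob ((\<lambda>\<omega>. (V \<omega>, U \<omega>)) -` {z} \<inter> space M)) = 0"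
          by simp
      qed
    qed
    then show ?thesis by simp
  qed
  also have "\<dots> = - (\<Sum>x\<in>?S. \<Sum>y\<in>?T. ?p x * ?q y * log b (?p x * ?q y))"
    by (simp add: sum.cartesian_product split_def ind[symmetric])
  also have "\<dots> = - (\<Sum>x\<in>?S. \<Sum>y\<in>?T. ?p x * log b (?p x) * ?q y + ?p x * (?q y * log b (?q y)))"
  proof -
    have key2: "?p x * ?q y * log b (?p x * ?q y) = ?p x * log b (?p x) * ?q y + ?p x * (?q y * log b (?q y))" for x y
      using key[of x y] by (simp add: algebra_simps)
    show ?thesis by (simp only: key2)
  qed
  also have "\<dots> = - (\<Sum>x\<in>?S. ?p x * log b (?p x) * sum ?q ?T + ?p x * (\<Sum>y\<in>?T. ?q y * log b (?q y)))"
    by (simp add: sum.distrib sum_distrib_left)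
  also have "\<dots> = - (\<Sum>x\<in>?S. ?p x * log b (?p x)) - sum ?p ?S * (\<Sum>y\<in>?T. ?q y * log b (?q y))"
    by (simp add: sq sum.distrib sum_distrib_right[symmetric])
  also have "\<dots> = ent M b V + ent M b U"
    by (simp add: sp ent_sum[OF V] ent_sum[OF U])
  finally show ?thesis .
qed

lemma ent_indep:
  assumes V: "simple_function M V" and U: "simple_function M U"
    and ind: "\<forall>A B. prob {\<omega> \<in> space M. V \<omega> \<in> A \<and> U \<omega> \<in> B}
                = prob {\<omega> \<in> space M. V \<omega> \<in> A} * prob {\<omega> \<in> space M. U \<omega> \<in> B}"
  shows "ent M b (\<lambda>\<omega>. (f (V \<omega>), g (U \<omega>))) = ent M b (\<lambda>\<omega>. f (V \<omega>)) + ent M b (\<lambda>\<omega>. g (U \<omega>))"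
proof (rule ent_indep_pt)
  show "simple_function M (\<lambda>\<omega>. f (V \<omega>))" by (rule simple_function_compose1[OF V])
  show "simple_function M (\<lambda>\<omega>. g (U \<omega>))" by (rule simple_function_compose1[OF U])
  fix x y
  have "(\<lambda>\<omega>. (f (V \<omega>), g (U \<omega>))) -` {(x, y)} \<inter> space M = {\<omega> \<in> space M. V \<omega> \<in> f -` {x} \<and> U \<omega> \<in> g -` {y}}"
    "(\<lambda>\<omega>. f (V \<omega>)) -` {x} \<inter> space M = {\<omega> \<in> space M. V \<omega> \<in> f -` {x}}"
    "(\<lambda>\<omega>. g (U \<omega>)) -` {y} \<inter> space M = {\<omega> \<in> space M. U \<omega> \<in> g -` {y}}" by auto
  then show "prob ((\<lambda>\<omega>. (f (V \<omega>), g (U \<omega>))) -` {(x, y)} \<inter> space M) =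
         prob ((\<lambda>\<omega>. f (V \<omega>)) -` {x} \<inter> space M) * prob ((\<lambda>\<omega>. g (U \<omega>)) -` {y} \<inter> space M)"
    using ind[rule_format, of "f -` {x}" "g -` {y}"] by (simp add: vimage_def)
qed

lemma prob_out: "y \<notin> X`space M \<Longrightarrow> prob (X -` {y} \<inter> space M) = 0"
  by (subgoal_tac "X -` {y} \<inter> space M = {}") auto

lemma ent_distr:
  assumes V: "simple_function M V" and V': "simple_function M V'"
    and D: "distr M (count_space UNIV) V = distr M (count_space UNIV) V'"
  shows "ent M b (\<lambda>\<omega>. g (V \<omega>)) = ent M b (\<lambda>\<omega>. g (V' \<omega>))"
proof -
  have mV: "V \<in> measurable M (count_space UNIV)" and mV': "V' \<in> measurable M (count_space UNIV)"
    using V V' by (auto simp: simple_function_eq_measurable)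
  have gV: "simple_function M (\<lambda>\<omega>. g (V \<omega>))" and gV': "simple_function M (\<lambda>\<omega>. g (V' \<omega>))"
    using V V' by (auto intro: simple_function_compose1)
  let ?P = "\<lambda>y. prob ((\<lambda>\<omega>. g (V \<omega>)) -` {y} \<inter> space M)"
  let ?P' = "\<lambda>y. prob ((\<lambda>\<omega>. g (V' \<omega>)) -` {y} \<inter> space M)"
  have PP: "?P y = ?P' y" for y
  proof -
    have "?P y = measure (distr M (count_space UNIV) V) (g -` {y})"
      using mV by (subst measure_distr) (auto intro!: arg_cong[where f=prob])
    also have "\<dots> = measure (distr M (count_space UNIV) V') (g -` {y})" by (simp add: D)
    also have "\<dots> = ?P' y"
      using mV' by (subst measure_distr) (auto intro!: arg_cong[where f=prob])
    finally show ?thesis .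
  qed
  let ?U = "(\<lambda>\<omega>. g (V \<omega>))`space M \<union> (\<lambda>\<omega>. g (V' \<omega>))`space M"
  have fU: "finite ?U" using gV gV' by (auto simp: simple_functionD)
  have "(\<Sum>y\<in>(\<lambda>\<omega>. g (V \<omega>))`space M. ?P y * log b (?P y)) = (\<Sum>y\<in>?U. ?P y * log b (?P y))"
    by (rule sum.mono_neutral_left[OF fU]) (auto simp: PP[symmetric] prob_out)
  moreover
  have "(\<Sum>y\<in>(\<lambda>\<omega>. g (V' \<omega>))`space M. ?P' y * log b (?P' y)) = (\<Sum>y\<in>?U. ?P' y * log b (?P' y))"
    by (rule sum.mono_neutral_left[OF fU]) (auto simp: PP prob_out)
  ultimately show ?thesis
    unfolding ent_sum[OF gV] ent_sum[OF gV'] by (simp add: PP)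
qed

lemma ent_card:
  assumes X: "simple_function M X" and S: "X`space M \<subseteq> S" "finite S"
  shows "ent M b X \<le> log b (real (card S))"
proof -
  have "ent M b X \<le> log b (real (card (X`space M)))"
    unfolding ent_is by (rule entropy_le_card[OF simple_distributedI[OF X measure_nonneg refl]])
  also have "\<dots> \<le> log b (real (card S))"
  proof -
    have "card (X`space M) > 0" using not_empty S by (auto simp: card_gt_0_iff intro: finite_subset)
    moreover have "card (X`space M) \<le> card S" using S by (simp add: card_mono)
    ultimately show ?thesis using b_gt_1 by simp
  qed
  finally show ?thesis .
qed

lemma cond_list:
  assumes Y: "\<And>i. i \<in> set xs \<Longrightarrow> simple_function M (Y i)" and Z: "simple_function M Z"
  shows "ent M b (\<lambda>\<omega>. (map (\<lambda>i. Y i \<omega>) xs, Z \<omega>)) - ent M b Z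
     \<le> (\<Sum>i\<leftarrow>xs. ent M b (\<lambda>\<omega>. (Y i \<omega>, Z \<omega>)) - ent M b Z)"
  using Y
proof (induction xs)
  case Nil
  have "ent M b (\<lambda>\<omega>. (map (\<lambda>i. Y i \<omega>) [], Z \<omega>)) = ent M b Z"
    by (rule ent_eq[OF Z, where f="\<lambda>z. ([],z)" and g=snd]) auto
  then show ?case by simp
next
  case (Cons x xs)
  have Yx: "simple_function M (Y x)" using Cons by simp
  have R: "simple_function M (\<lambda>\<omega>. map (\<lambda>i. Y i \<omega>) xs)" by (rule sf_map) (use Cons in auto)
  have e: "ent M b (\<lambda>\<omega>. (map (\<lambda>i. Y i \<omega>) (x # xs), Z \<omega>)) = ent M b (\<lambda>\<omega>. (Y x \<omega>, map (\<lambda>i. Y i \<omega>) xs, Z \<omega>))"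
    by (rule ent_eq[where f="\<lambda>(a,r,z). (a#r,z)" and g="\<lambda>(l,z). (hd l, tl l, z)"]) (use Yx R Z in auto)
  have s: "ent M b (\<lambda>\<omega>. (Y x \<omega>, map (\<lambda>i. Y i \<omega>) xs, Z \<omega>)) + ent M b Z
     \<le> ent M b (\<lambda>\<omega>. (Y x \<omega>, Z \<omega>)) + ent M b (\<lambda>\<omega>. (map (\<lambda>i. Y i \<omega>) xs, Z \<omega>))"
    by (rule submod[OF Yx R Z])
  show ?case using e s Cons by simp
qed

end


context information_space
begin

lemma cmi_mono:
  assumes X: "simple_function M X" and Y: "simple_function M Y" and Z: "simple_function M Z"
    and f: "\<And>\<omega>. \<omega> \<in> space M \<Longrightarrow> Y' \<omega> = f (Y \<omega>)"
  shows "cmi M b X Y' Z \<le> cmi M b X Y Z"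
proof -
  have Y': "simple_function M Y'"
    using simple_function_compose1[OF Y, of f] f by (subst simple_function_cong) auto
  have "ent M b (\<lambda>x. (X x, Y x, Z x)) - ent M b (\<lambda>x. (Y x, Z x))
     \<le> ent M b (\<lambda>x. (X x, Y' x, Z x)) - ent M b (\<lambda>x. (Y' x, Z x))"
    using cond_mono[of X "\<lambda>x. (Y x, Z x)" "\<lambda>x. (Y' x, Z x)" "\<lambda>(y,z). (f y, z)"] X Y Z f by auto
  then show ?thesis using cmi_ent[OF X Y Z] cmi_ent[OF X Y' Z] by simp
qed

end

lemma msgs_take: "k \<le> K \<Longrightarrow> take k (msgs W L 1 K \<omega>) = msgs W L 1 k \<omega>"
  by (simp add: msgs_def take_map take_upt del: upt_Suc)
lemma msgs_drop: "k \<le> K \<Longrightarrow> drop k (msgs W L 1 K \<omega>) = msgs W L (k+1) K \<omega>"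
  by (simp add: msgs_def drop_map drop_upt del: upt_Suc)
lemma msgs_nth: "i \<in> {1..K} \<Longrightarrow> msgs W L 1 K \<omega> ! (i - 1) = W L i \<omega>"
  by (auto simp: msgs_def nth_map simp del: upt_Suc)
lemma msgs_snoc: "1 \<le> k \<Longrightarrow> msgs W L 1 k \<omega> = msgs W L 1 (k-1) \<omega> @ [W L k \<omega>]"
  by (cases k) (auto simp: msgs_def)
lemma msgs_cons: "k \<le> K \<Longrightarrow> msgs W L k K \<omega> = W L k \<omega> # msgs W L (k+1) K \<omega>"
  by (simp add: msgs_def upt_conv_Cons del: upt_Suc)
lemma qlist_nth: "n \<in> {1..N} \<Longrightarrow> qlist Q L \<theta> h N \<omega> ! (n - 1) = Q L \<theta> h n \<omega>"
  by (auto simp: qlist_def nth_map simp del: upt_Suc)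
lemma sum_list_nonpos: "(\<And>x. x \<in> set xs \<Longrightarrow> f x \<le> (0::real)) \<Longrightarrow> (\<Sum>x\<leftarrow>xs. f x) \<le> 0"
  by (induction xs) (auto simp: add_nonpos_nonpos)



declare One_nat_def[simp del]

lemma final_alg:
  fixes N x t l r c :: real
  assumes "N > 0" "N * x \<ge> t + l * (1 - r) - c"
  shows "x \<ge> 1 / N * t + l / N * (1 - r) - c / N"
proof -
  have "1 / N * t + l / N * (1 - r) - c / N = (t + l * (1 - r) - c) / N"
    using assms(1) by (simp add: field_simps)
  also have "\<dots> \<le> x" using assms by (simp add: pos_divide_le_eq mult.commute)
  finally show ?thesis .
qed

lemma per_L:
  fixes Mm :: "'a measure"
    and W :: "nat \<Rightarrow> nat \<Rightarrow> 'a \<Rightarrow> 's::finite list"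
    and Q :: "nat \<Rightarrow> nat \<Rightarrow> nat set \<Rightarrow> nat \<Rightarrow> 'a \<Rightarrow> 'qu"
    and A :: "nat \<Rightarrow> nat \<Rightarrow> nat set \<Rightarrow> nat \<Rightarrow> 'a \<Rightarrow> 'an"
    and r :: "nat \<Rightarrow> real"
    and N K Mc k L :: nat
  assumes IS: "information_space Mm b"
    and bdef: "b = real CARD('s)"
    and N_pos: "N \<ge> 1" and Mc_le: "Mc \<le> K" and k1: "1 \<le> k" and kK: "k < K"
    and rr: "\<And>i. i \<in> {1..Mc} \<Longrightarrow> 0 \<le> r i"
    and r0: "\<And>i. i > Mc \<Longrightarrow> r i = 0"
    and W_sf: "\<And>j. j \<in> {1..K} \<Longrightarrow> simple_function Mm (W L j)"
    and W_len: "\<And>j \<omega>. j \<in> {1..K} \<Longrightarrow> \<omega> \<in> space Mm \<Longrightarrow> length (W L j \<omega>) = L"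
    and W_ent: "ent Mm b (W L k) = real L"
    and W_indep: "prob_space.indep_vars Mm (\<lambda>_. count_space UNIV) (W L) {1..K}"
    and Q_sf: "\<And>\<theta> n. \<theta> \<in> {k, k+1} \<Longrightarrow> n \<in> {1..N} \<Longrightarrow> simple_function Mm (Q L \<theta> {1..Mc} n)"
    and A_sf: "\<And>\<theta> n. \<theta> \<in> {k, k+1} \<Longrightarrow> n \<in> {1..N} \<Longrightarrow> simple_function Mm (A L \<theta> {1..Mc} n)"
    and Q_indep: "\<forall>X Y. measure Mm {\<omega> \<in> space Mm. qlist Q L k {1..Mc} N \<omega> \<in> X \<and> msgs W L 1 K \<omega> \<in> Y}
                   = measure Mm {\<omega> \<in> space Mm. qlist Q L k {1..Mc} N \<omega> \<in> X}
                     * measure Mm {\<omega> \<in> space Mm. msgs W L 1 K \<omega> \<in> Y}"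
    and A_det: "\<And>n. n \<in> {1..N} \<Longrightarrow>
                 cent Mm b (A L k {1..Mc} n) (\<lambda>\<omega>. (Q L k {1..Mc} n \<omega>, msgs W L 1 K \<omega>)) = 0"
    and privacy: "\<And>n. n \<in> {1..N} \<Longrightarrow>
                 distr Mm (count_space UNIV) (\<lambda>\<omega>. (Q L (k+1) {1..Mc} n \<omega>, A L (k+1) {1..Mc} n \<omega>, msgs W L 1 K \<omega>))
                 = distr Mm (count_space UNIV) (\<lambda>\<omega>. (Q L k {1..Mc} n \<omega>, A L k {1..Mc} n \<omega>, msgs W L 1 K \<omega>))"
  shows "cmi Mm b (msgs W L 1 k)
               (\<lambda>\<omega>. (qlist Q L (k + 1) {1..Mc} N \<omega>, qlist A L (k + 1) {1..Mc} N \<omega>))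
               (\<lambda>\<omega>. (cache W r Mc L \<omega>, msgs W L (k + 1) K \<omega>))
           \<ge> 1 / real N *
             cmi Mm b (msgs W L 1 (k - 1))
               (\<lambda>\<omega>. (qlist Q L k {1..Mc} N \<omega>, qlist A L k {1..Mc} N \<omega>))
               (\<lambda>\<omega>. (cache W r Mc L \<omega>, msgs W L k K \<omega>))
             + real L / real N * (1 - r k)
             - cent Mm b (W L k) (\<lambda>\<omega>. (cache W r Mc L \<omega>, qlist Q L k {1..Mc} N \<omega>, qlist A L k {1..Mc} N \<omega>)) / real N"
proof -
  interpret information_space Mm b by (rule IS)
  let ?Wall = "msgs W L 1 K"
  let ?X = "msgs W L 1 k"
  let ?X1 = "msgs W L 1 (k - 1)"
  let ?Wk = "W L k"
  let ?C = "cache W r Mc L"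
  let ?R = "msgs W L (k + 1) K"
  let ?R' = "msgs W L k K"
  let ?Z = "\<lambda>\<omega>. (?C \<omega>, ?R \<omega>)"
  let ?Z2 = "\<lambda>\<omega>. (?C \<omega>, ?R' \<omega>)"
  let ?q = "\<lambda>\<theta>. qlist Q L \<theta> {1..Mc} N"
  let ?a = "\<lambda>\<theta>. qlist A L \<theta> {1..Mc} N"
  let ?Y = "\<lambda>\<theta> \<omega>. (?q \<theta> \<omega>, ?a \<theta> \<omega>)"
  let ?qn = "\<lambda>\<theta> n. Q L \<theta> {1..Mc} n"
  let ?an = "\<lambda>\<theta> n. A L \<theta> {1..Mc} n"
  define mm where "mm i = nat \<lfloor>real L * r i\<rfloor>" for i
  define cfun :: "'s list list \<Rightarrow> 's list list" where "cfun ws = map (\<lambda>i. take (mm i) (ws ! (i - 1))) [1..<Suc Mc]" for ws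
  define m where "m = mm k"

  have sMsgs: "simple_function Mm (msgs W L i j)" if "1 \<le> i" "j \<le> K" for i j
    unfolding msgs_def by (rule sf_map) (use that W_sf in auto)
  have sWall: "simple_function Mm ?Wall" by (rule sMsgs) auto
  have sX: "simple_function Mm ?X" by (rule sMsgs) (use kK in auto)
  have sX1: "simple_function Mm ?X1" by (rule sMsgs) (use kK in auto)
  have sR: "simple_function Mm ?R" by (rule sMsgs) auto
  have sR': "simple_function Mm ?R'" by (rule sMsgs) (use k1 in auto)
  have sWk: "simple_function Mm ?Wk" using W_sf k1 kK by auto
  have eqC: "?C \<omega> = cfun (?Wall \<omega>)" for \<omega>
  proof -
    have *: "W L i \<omega> = ?Wall \<omega> ! (i - 1)" if "i \<in> set [1..<Suc Mc]" for i
      using msgs_nth[of i K W L \<omega>] that Mc_le by auto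
    show ?thesis unfolding cache_def cfun_def mm_def
      apply (rule list.map_cong)
      apply (rule refl)
      using * by simp
  qed
  have eqCf: "?C = (\<lambda>\<omega>. cfun (?Wall \<omega>))" by (rule ext) (rule eqC)
  have sC: "simple_function Mm ?C"
    unfolding eqCf by (rule simple_function_compose1[OF sWall])
  have sZ: "simple_function Mm ?Z" using sC sR by simp
  have sZ2: "simple_function Mm ?Z2" using sC sR' by simp
  have sq: "simple_function Mm (?q \<theta>)" if "\<theta> \<in> {k, k+1}" for \<theta>
    unfolding qlist_def by (rule sf_map) (use that Q_sf in auto)
  have sa: "simple_function Mm (?a \<theta>)" if "\<theta> \<in> {k, k+1}" for \<theta>
    unfolding qlist_def by (rule sf_map) (use that A_sf in auto)
  have sY: "simple_function Mm (?Y \<theta>)" if "\<theta> \<in> {k, k+1}" for \<theta>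
    using sq[OF that] sa[OF that] by simp
  have sqn: "simple_function Mm (?qn \<theta> n)" if "\<theta> \<in> {k, k+1}" "n \<in> {1..N}" for \<theta> n
    using Q_sf that by auto
  have san: "simple_function Mm (?an \<theta> n)" if "\<theta> \<in> {k, k+1}" "n \<in> {1..N}" for \<theta> n
    using A_sf that by auto

  have kleK: "k \<le> K" using kK by simp
  have msgs_app: "?X \<omega> @ ?R \<omega> = ?Wall \<omega>" for \<omega>
    using append_take_drop_id[of k "?Wall \<omega>"] msgs_take[OF kleK] msgs_drop[OF kleK] by metis
  have eqXw: "take k (?Wall \<omega>) = ?X \<omega>" for \<omega> using msgs_take[OF kleK] .
  have eqRw: "drop k (?Wall \<omega>) = ?R \<omega>" for \<omega> using msgs_drop[OF kleK] .
  have sQA: "simple_function Mm (\<lambda>\<omega>. (?qn \<theta> n \<omega>, ?an \<theta> n \<omega>))" if "\<theta> \<in> {k, k+1}" "n \<in> {1..N}" for \<theta> n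
    using sqn[OF that] san[OF that] by simp
  have sV: "simple_function Mm (\<lambda>\<omega>. (?qn \<theta> n \<omega>, ?an \<theta> n \<omega>, ?Wall \<omega>))" if "\<theta> \<in> {k, k+1}" "n \<in> {1..N}" for \<theta> n
    using sqn[OF that] san[OF that] sWall by simp

  have stepab: "cmi Mm b ?X (\<lambda>\<omega>. (?qn k n \<omega>, ?an k n \<omega>)) ?Z \<le> cmi Mm b ?X (?Y (k+1)) ?Z"
    if n: "n \<in> {1..N}" for n
  proof -
    have a: "cmi Mm b ?X (\<lambda>\<omega>. (?qn (k+1) n \<omega>, ?an (k+1) n \<omega>)) ?Z \<le> cmi Mm b ?X (?Y (k+1)) ?Z"
      by (rule cmi_mono[OF sX sY[of "k+1"] sZ, where f="\<lambda>(qs,as). (qs!(n-1), as!(n-1))"])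
         (use qlist_nth[OF n, of Q L "k+1" "{1..Mc}"] qlist_nth[OF n, of A L "k+1" "{1..Mc}"] in auto)
    define g1 where "g1 = (\<lambda>(q::'qu, a::'an, w::'s list list). ((q,a), cfun w, drop k w))"
    define g2 where "g2 = (\<lambda>(q::'qu, a::'an, w::'s list list). (take k w, (q,a), cfun w, drop k w))"
    have e1: "(\<lambda>\<omega>. ((?qn \<theta> n \<omega>, ?an \<theta> n \<omega>), ?C \<omega>, ?R \<omega>)) = (\<lambda>\<omega>. g1 (?qn \<theta> n \<omega>, ?an \<theta> n \<omega>, ?Wall \<omega>))" for \<theta>
      by (rule ext) (simp add: g1_def eqC eqRw)
    have e2: "(\<lambda>\<omega>. (?X \<omega>, (?qn \<theta> n \<omega>, ?an \<theta> n \<omega>), ?C \<omega>, ?R \<omega>)) = (\<lambda>\<omega>. g2 (?qn \<theta> n \<omega>, ?an \<theta> n \<omega>, ?Wall \<omega>))" for \<theta>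
      by (rule ext) (simp add: g2_def eqC eqRw eqXw)
    have d1: "ent Mm b (\<lambda>\<omega>. g1 (?qn (k+1) n \<omega>, ?an (k+1) n \<omega>, ?Wall \<omega>)) = ent Mm b (\<lambda>\<omega>. g1 (?qn k n \<omega>, ?an k n \<omega>, ?Wall \<omega>))"
      by (rule ent_distr[OF sV sV privacy[OF n]]) (use n in auto)
    have d2: "ent Mm b (\<lambda>\<omega>. g2 (?qn (k+1) n \<omega>, ?an (k+1) n \<omega>, ?Wall \<omega>)) = ent Mm b (\<lambda>\<omega>. g2 (?qn k n \<omega>, ?an k n \<omega>, ?Wall \<omega>))"
      by (rule ent_distr[OF sV sV privacy[OF n]]) (use n in auto)
    have c: "cmi Mm b ?X (\<lambda>\<omega>. (?qn \<theta> n \<omega>, ?an \<theta> n \<omega>)) ?Z = ent Mm b (\<lambda>\<omega>. (?X \<omega>, ?C \<omega>, ?R \<omega>))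
       + ent Mm b (\<lambda>\<omega>. g1 (?qn \<theta> n \<omega>, ?an \<theta> n \<omega>, ?Wall \<omega>)) - ent Mm b (\<lambda>\<omega>. g2 (?qn \<theta> n \<omega>, ?an \<theta> n \<omega>, ?Wall \<omega>))
       - ent Mm b ?Z" if "\<theta> \<in> {k, k+1}" for \<theta>
      unfolding cmi_ent[OF sX sQA[OF that n] sZ] e1[symmetric] e2[symmetric] ..
    have "cmi Mm b ?X (\<lambda>\<omega>. (?qn (k+1) n \<omega>, ?an (k+1) n \<omega>)) ?Z = cmi Mm b ?X (\<lambda>\<omega>. (?qn k n \<omega>, ?an k n \<omega>)) ?Z"
      using c[of "k+1"] c[of k] d1 d2 by simp
    then show ?thesis using a by simp
  qed

  have kin: "k \<in> {k, k+1}" by simp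
  have sqW: "simple_function Mm (\<lambda>\<omega>. (?q k \<omega>, ?Wall \<omega>))" using sq[OF kin] sWall by simp
  have sqZ: "simple_function Mm (\<lambda>\<omega>. (?q k \<omega>, ?C \<omega>, ?R \<omega>))" using sq[OF kin] sZ by simp
  have c1: "ent Mm b (\<lambda>\<omega>. (?X \<omega>, ?C \<omega>, ?R \<omega>)) = ent Mm b ?Wall"
    by (rule ent_eq[OF sWall, where f="\<lambda>w. (take k w, cfun w, drop k w)" and g="\<lambda>(x,c,r). x @ r"])
       (simp_all add: eqC eqXw eqRw msgs_app)
  have indW: "ent Mm b (\<lambda>\<omega>. (f (?q k \<omega>), ?Wall \<omega>)) = ent Mm b (\<lambda>\<omega>. f (?q k \<omega>)) + ent Mm b ?Wall" for f :: "'qu list \<Rightarrow> 'z"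
    using ent_indep[OF sq[OF kin] sWall Q_indep, where f=f and g="\<lambda>x. x"] by simp
  have indZ: "ent Mm b (\<lambda>\<omega>. (f (?q k \<omega>), ?C \<omega>, ?R \<omega>)) = ent Mm b (\<lambda>\<omega>. f (?q k \<omega>)) + ent Mm b ?Z" for f :: "'qu list \<Rightarrow> 'z"
  proof -
    have "ent Mm b (\<lambda>\<omega>. (f (?q k \<omega>), cfun (?Wall \<omega>), drop k (?Wall \<omega>))) = ent Mm b (\<lambda>\<omega>. f (?q k \<omega>)) + ent Mm b (\<lambda>\<omega>. (cfun (?Wall \<omega>), drop k (?Wall \<omega>)))"
      by (rule ent_indep[OF sq[OF kin] sWall Q_indep])
    moreover have "(\<lambda>\<omega>. (f (?q k \<omega>), cfun (?Wall \<omega>), drop k (?Wall \<omega>))) = (\<lambda>\<omega>. (f (?q k \<omega>), ?C \<omega>, ?R \<omega>))"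
      by (simp add: eqC eqRw)
    moreover have "(\<lambda>\<omega>. (cfun (?Wall \<omega>), drop k (?Wall \<omega>))) = ?Z"
      by (simp add: eqC eqRw)
    ultimately show ?thesis by simp
  qed
  have qnq: "?qn k n \<omega> = ?q k \<omega> ! (n - 1)" if "n \<in> {1..N}" for n \<omega>
    by (rule qlist_nth[OF that, symmetric])
  have qnqf: "?qn k n = (\<lambda>\<omega>. ?q k \<omega> ! (n - 1))" if "n \<in> {1..N}" for n
    by (rule ext) (rule qnq[OF that])
  have indWn: "ent Mm b (\<lambda>\<omega>. (?qn k n \<omega>, ?Wall \<omega>)) = ent Mm b (?qn k n) + ent Mm b ?Wall" if n: "n \<in> {1..N}" for n
    using indW[of "\<lambda>qs. qs ! (n - 1)"] qnq[OF n] by (simp add: fun_eq_iff[symmetric] qnqf[OF n])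
  have indZn: "ent Mm b (\<lambda>\<omega>. (?qn k n \<omega>, ?C \<omega>, ?R \<omega>)) = ent Mm b (?qn k n) + ent Mm b ?Z" if n: "n \<in> {1..N}" for n
    using indZ[of "\<lambda>qs. qs ! (n - 1)"] qnq[OF n] by (simp add: qnqf[OF n])
  have detn: "ent Mm b (\<lambda>\<omega>. (?an k n \<omega>, ?qn k n \<omega>, ?Wall \<omega>)) = ent Mm b (\<lambda>\<omega>. (?qn k n \<omega>, ?Wall \<omega>))" if n: "n \<in> {1..N}" for n
    using A_det[OF n] cent_ent[OF san[OF kin n], of "\<lambda>\<omega>. (?qn k n \<omega>, ?Wall \<omega>)"] sqn[OF kin n] sWall by simp
  have c6: "cmi Mm b ?X (\<lambda>\<omega>. (?qn k n \<omega>, ?an k n \<omega>)) ?Z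
      = ent Mm b (\<lambda>\<omega>. (?an k n \<omega>, ?qn k n \<omega>, ?C \<omega>, ?R \<omega>)) - ent Mm b (\<lambda>\<omega>. (?qn k n \<omega>, ?C \<omega>, ?R \<omega>))"
    if n: "n \<in> {1..N}" for n
  proof -
    have s1: "simple_function Mm (\<lambda>\<omega>. (?an k n \<omega>, ?qn k n \<omega>, ?Wall \<omega>))"
      using san[OF kin n] sqn[OF kin n] sWall by simp
    have s2: "simple_function Mm (\<lambda>\<omega>. (?an k n \<omega>, ?qn k n \<omega>, ?C \<omega>, ?R \<omega>))"
      using san[OF kin n] sqn[OF kin n] sZ by simp
    have r1: "ent Mm b (\<lambda>\<omega>. (?X \<omega>, (?qn k n \<omega>, ?an k n \<omega>), ?C \<omega>, ?R \<omega>)) = ent Mm b (\<lambda>\<omega>. (?an k n \<omega>, ?qn k n \<omega>, ?Wall \<omega>))"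
      by (rule ent_eq[OF s1, where f="\<lambda>(a,q,w). (take k w, (q,a), cfun w, drop k w)" and g="\<lambda>(x,(q,a),c,r). (a,q,x@r)"])
         (simp_all add: eqC eqXw eqRw msgs_app)
    have r2: "ent Mm b (\<lambda>\<omega>. ((?qn k n \<omega>, ?an k n \<omega>), ?C \<omega>, ?R \<omega>)) = ent Mm b (\<lambda>\<omega>. (?an k n \<omega>, ?qn k n \<omega>, ?C \<omega>, ?R \<omega>))"
      by (rule ent_eq[OF s2, where f="\<lambda>(a,q,z). ((q,a),z)" and g="\<lambda>((q,a),z). (a,q,z)"]) simp_all
    show ?thesis
      unfolding cmi_ent[OF sX sQA[OF kin n] sZ] using r1 r2 c1 detn[OF n] indWn[OF n] indZn[OF n] by simp
  qed
  have c7: "cmi Mm b ?X (?Y k) ?Z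
      = ent Mm b (\<lambda>\<omega>. (?a k \<omega>, ?q k \<omega>, ?C \<omega>, ?R \<omega>)) - ent Mm b (\<lambda>\<omega>. (?q k \<omega>, ?C \<omega>, ?R \<omega>))"
  proof -
    have s1: "simple_function Mm (\<lambda>\<omega>. (?a k \<omega>, ?q k \<omega>, ?Wall \<omega>))"
      using sa[OF kin] sq[OF kin] sWall by simp
    have s2: "simple_function Mm (\<lambda>\<omega>. (?a k \<omega>, ?q k \<omega>, ?C \<omega>, ?R \<omega>))"
      using sa[OF kin] sq[OF kin] sZ by simp
    have r1: "ent Mm b (\<lambda>\<omega>. (?X \<omega>, (?q k \<omega>, ?a k \<omega>), ?C \<omega>, ?R \<omega>)) = ent Mm b (\<lambda>\<omega>. (?a k \<omega>, ?q k \<omega>, ?Wall \<omega>))"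
      by (rule ent_eq[OF s1, where f="\<lambda>(a,q,w). (take k w, (q,a), cfun w, drop k w)" and g="\<lambda>(x,(q,a),c,r). (a,q,x@r)"])
         (simp_all add: eqC eqXw eqRw msgs_app)
    have r2: "ent Mm b (\<lambda>\<omega>. ((?q k \<omega>, ?a k \<omega>), ?C \<omega>, ?R \<omega>)) = ent Mm b (\<lambda>\<omega>. (?a k \<omega>, ?q k \<omega>, ?C \<omega>, ?R \<omega>))"
      by (rule ent_eq[OF s2, where f="\<lambda>(a,q,z). ((q,a),z)" and g="\<lambda>((q,a),z). (a,q,z)"]) simp_all
    have aeq: "?a k = (\<lambda>\<omega>. map (\<lambda>i. ?an k i \<omega>) [1..<Suc N])" by (simp only: qlist_def)
    have det: "ent Mm b (\<lambda>\<omega>. (?a k \<omega>, ?q k \<omega>, ?Wall \<omega>)) = ent Mm b (\<lambda>\<omega>. (?q k \<omega>, ?Wall \<omega>))"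
    proof (rule antisym)
      have "ent Mm b (\<lambda>\<omega>. (map (\<lambda>i. ?an k i \<omega>) [1..<Suc N], ?q k \<omega>, ?Wall \<omega>)) - ent Mm b (\<lambda>\<omega>. (?q k \<omega>, ?Wall \<omega>))
          \<le> (\<Sum>i\<leftarrow>[1..<Suc N]. ent Mm b (\<lambda>\<omega>. (?an k i \<omega>, ?q k \<omega>, ?Wall \<omega>)) - ent Mm b (\<lambda>\<omega>. (?q k \<omega>, ?Wall \<omega>)))"
        by (rule cond_list[OF _ sqW]) (use san[OF kin] in auto)
      also have "\<dots> \<le> 0"
      proof (rule sum_list_nonpos)
        fix i assume "i \<in> set [1..<Suc N]"
        then have i: "i \<in> {1..N}" by auto
        have "ent Mm b (\<lambda>\<omega>. (?an k i \<omega>, ?q k \<omega>, ?Wall \<omega>)) - ent Mm b (\<lambda>\<omega>. (?q k \<omega>, ?Wall \<omega>))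
            \<le> ent Mm b (\<lambda>\<omega>. (?an k i \<omega>, ?qn k i \<omega>, ?Wall \<omega>)) - ent Mm b (\<lambda>\<omega>. (?qn k i \<omega>, ?Wall \<omega>))"
          by (rule cond_mono[OF san[OF kin i] sqW, where f="\<lambda>(qs,w). (qs ! (i - 1), w)"]) (simp add: qnq[OF i])
        then show "ent Mm b (\<lambda>\<omega>. (?an k i \<omega>, ?q k \<omega>, ?Wall \<omega>)) - ent Mm b (\<lambda>\<omega>. (?q k \<omega>, ?Wall \<omega>)) \<le> 0"
          using detn[OF i] by simp
      qed
      finally show "ent Mm b (\<lambda>\<omega>. (?a k \<omega>, ?q k \<omega>, ?Wall \<omega>)) \<le> ent Mm b (\<lambda>\<omega>. (?q k \<omega>, ?Wall \<omega>))"
        unfolding aeq by simp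
    next
      show "ent Mm b (\<lambda>\<omega>. (?q k \<omega>, ?Wall \<omega>)) \<le> ent Mm b (\<lambda>\<omega>. (?a k \<omega>, ?q k \<omega>, ?Wall \<omega>))"
        by (rule cent_nonneg[OF sa[OF kin] sqW])
    qed
    show ?thesis
      unfolding cmi_ent[OF sX sY[OF kin] sZ] using r1 r2 c1 det indW[of "\<lambda>x. x"] indZ[of "\<lambda>x. x"] by simp
  qed
  have stepc: "cmi Mm b ?X (?Y k) ?Z \<le> (\<Sum>n\<in>{1..N}. cmi Mm b ?X (\<lambda>\<omega>. (?qn k n \<omega>, ?an k n \<omega>)) ?Z)"
  proof -
    have aeq: "?a k = (\<lambda>\<omega>. map (\<lambda>i. ?an k i \<omega>) [1..<Suc N])" by (simp only: qlist_def)
    have "ent Mm b (\<lambda>\<omega>. (?a k \<omega>, ?q k \<omega>, ?C \<omega>, ?R \<omega>)) - ent Mm b (\<lambda>\<omega>. (?q k \<omega>, ?C \<omega>, ?R \<omega>))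
        \<le> (\<Sum>i\<leftarrow>[1..<Suc N]. ent Mm b (\<lambda>\<omega>. (?an k i \<omega>, ?q k \<omega>, ?C \<omega>, ?R \<omega>)) - ent Mm b (\<lambda>\<omega>. (?q k \<omega>, ?C \<omega>, ?R \<omega>)))"
      unfolding aeq by (rule cond_list[OF _ sqZ[unfolded aeq]]) (use san[OF kin] in auto)
    also have "\<dots> \<le> (\<Sum>i\<leftarrow>[1..<Suc N]. cmi Mm b ?X (\<lambda>\<omega>. (?qn k i \<omega>, ?an k i \<omega>)) ?Z)"
    proof (rule sum_list_mono)
      fix i assume "i \<in> set [1..<Suc N]"
      then have i: "i \<in> {1..N}" by auto
      have "ent Mm b (\<lambda>\<omega>. (?an k i \<omega>, ?q k \<omega>, ?C \<omega>, ?R \<omega>)) - ent Mm b (\<lambda>\<omega>. (?q k \<omega>, ?C \<omega>, ?R \<omega>))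
          \<le> ent Mm b (\<lambda>\<omega>. (?an k i \<omega>, ?qn k i \<omega>, ?C \<omega>, ?R \<omega>)) - ent Mm b (\<lambda>\<omega>. (?qn k i \<omega>, ?C \<omega>, ?R \<omega>))"
        by (rule cond_mono[OF san[OF kin i] sqZ, where f="\<lambda>(qs,z). (qs ! (i - 1), z)"]) (simp add: qnq[OF i])
      then show "ent Mm b (\<lambda>\<omega>. (?an k i \<omega>, ?q k \<omega>, ?C \<omega>, ?R \<omega>)) - ent Mm b (\<lambda>\<omega>. (?q k \<omega>, ?C \<omega>, ?R \<omega>))
          \<le> cmi Mm b ?X (\<lambda>\<omega>. (?qn k i \<omega>, ?an k i \<omega>)) ?Z"
        using c6[OF i] by simp
    qed
    also have "\<dots> = (\<Sum>n\<in>{1..N}. cmi Mm b ?X (\<lambda>\<omega>. (?qn k n \<omega>, ?an k n \<omega>)) ?Z)"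
      by (subst sum_set_upt_conv_sum_list_nat[symmetric]) (simp only: set_upt atLeastLessThanSuc_atLeastAtMost)
    finally show ?thesis unfolding c7 .
  qed

  have stepd: "cmi Mm b ?X (?Y k) ?Z = cmi Mm b ?X1 (?Y k) ?Z2 + cmi Mm b ?Wk (?Y k) ?Z"
  proof -
    note snoc = msgs_snoc[OF k1, of W L]
    note cons = msgs_cons[OF kleK, of W L]
    have sXZ: "simple_function Mm (\<lambda>\<omega>. (?X \<omega>, ?C \<omega>, ?R \<omega>))" using sX sZ by simp
    have sWYZ: "simple_function Mm (\<lambda>\<omega>. (?Wk \<omega>, (?q k \<omega>, ?a k \<omega>), ?C \<omega>, ?R \<omega>))" using sWk sY[OF kin] sZ by simp
    have sXYZ: "simple_function Mm (\<lambda>\<omega>. (?X \<omega>, (?q k \<omega>, ?a k \<omega>), ?C \<omega>, ?R \<omega>))" using sX sY[OF kin] sZ by simp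
    have sWZ: "simple_function Mm (\<lambda>\<omega>. (?Wk \<omega>, ?C \<omega>, ?R \<omega>))" using sWk sZ by simp
    have d1: "ent Mm b (\<lambda>\<omega>. (?X1 \<omega>, ?C \<omega>, ?R' \<omega>)) = ent Mm b (\<lambda>\<omega>. (?X \<omega>, ?C \<omega>, ?R \<omega>))"
      by (rule ent_eq[OF sXZ, where f="\<lambda>(x,c,r). (butlast x, c, last x # r)" and g="\<lambda>(x1,c,r'). (x1 @ [hd r'], c, tl r')"])
         (simp_all add: snoc cons)
    have d2: "ent Mm b (\<lambda>\<omega>. ((?q k \<omega>, ?a k \<omega>), ?C \<omega>, ?R' \<omega>)) = ent Mm b (\<lambda>\<omega>. (?Wk \<omega>, (?q k \<omega>, ?a k \<omega>), ?C \<omega>, ?R \<omega>))"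
      by (rule ent_eq[OF sWYZ, where f="\<lambda>(w,y,c,r). (y, c, w # r)" and g="\<lambda>(y,c,r'). (hd r', y, c, tl r')"])
         (simp_all add: cons)
    have d3: "ent Mm b (\<lambda>\<omega>. (?X1 \<omega>, (?q k \<omega>, ?a k \<omega>), ?C \<omega>, ?R' \<omega>)) = ent Mm b (\<lambda>\<omega>. (?X \<omega>, (?q k \<omega>, ?a k \<omega>), ?C \<omega>, ?R \<omega>))"
      by (rule ent_eq[OF sXYZ, where f="\<lambda>(x,y,c,r). (butlast x, y, c, last x # r)" and g="\<lambda>(x1,y,c,r'). (x1 @ [hd r'], y, c, tl r')"])
         (simp_all add: snoc cons)
    have d4: "ent Mm b (\<lambda>\<omega>. (?C \<omega>, ?R' \<omega>)) = ent Mm b (\<lambda>\<omega>. (?Wk \<omega>, ?C \<omega>, ?R \<omega>))"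
      by (rule ent_eq[OF sWZ, where f="\<lambda>(w,c,r). (c, w # r)" and g="\<lambda>(c,r'). (hd r', c, tl r')"])
         (simp_all add: cons)
    show ?thesis
      unfolding cmi_ent[OF sX sY[OF kin] sZ] cmi_ent[OF sX1 sY[OF kin] sZ2] cmi_ent[OF sWk sY[OF kin] sZ]
      using d1 d2 d3 d4 by simp
  qed

  have stepe: "cmi Mm b ?Wk (?Y k) ?Z \<ge> real L - real m - cent Mm b ?Wk (\<lambda>\<omega>. (?C \<omega>, ?q k \<omega>, ?a k \<omega>))"
  proof -
    define J where "J = {1..K} - {k}"
    have kJ: "k \<notin> J" and finJ: "finite J" and JK: "J \<subseteq> {1..K}" unfolding J_def by auto
    have Jne: "J \<noteq> {}"
    proof (cases "k = 1")
      case True then have "2 \<in> J" using kK unfolding J_def by auto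
      then show ?thesis by auto
    next
      case False then have "1 \<in> J" using kK unfolding J_def by auto
      then show ?thesis by auto
    qed
    define wmf :: "'s list list \<Rightarrow> nat \<Rightarrow> 's list" where "wmf ws = (\<lambda>j. if j \<in> J then ws ! (j - 1) else [])" for ws
    define Zf :: "'s list \<times> (nat \<Rightarrow> 's list) \<Rightarrow> 's list list \<times> 's list list"
      where "Zf = (\<lambda>(c, wm). (map (\<lambda>i. take (mm i) (if i = k then c else wm i)) [1..<Suc Mc], map wm [k+1..<Suc K]))"
    let ?Wm = "\<lambda>\<omega>. wmf (?Wall \<omega>)"
    let ?ck = "\<lambda>\<omega>. take m (?Wk \<omega>)"
    have Wm_j: "?Wm \<omega> j = (if j \<in> J then W L j \<omega> else [])" for \<omega> j
      unfolding wmf_def using JK msgs_nth[of j K W L \<omega>] by auto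
    have eqZ: "(?C \<omega>, ?R \<omega>) = Zf (?ck \<omega>, ?Wm \<omega>)" for \<omega>
    proof -
      have "?C \<omega> = map (\<lambda>i. take (mm i) (if i = k then ?ck \<omega> else ?Wm \<omega> i)) [1..<Suc Mc]"
        unfolding cache_def
      proof (rule list.map_cong[OF refl])
        fix i assume i: "i \<in> set [1..<Suc Mc]"
        show "take (nat \<lfloor>real L * r i\<rfloor>) (W L i \<omega>) = take (mm i) (if i = k then ?ck \<omega> else ?Wm \<omega> i)"
        proof (cases "i = k")
          case True then show ?thesis by (simp add: mm_def m_def)
        next
          case False then have "i \<in> J" using i Mc_le unfolding J_def by auto
          then show ?thesis using False by (simp add: Wm_j mm_def)
        qed
      qed
      moreover have "?R \<omega> = map (?Wm \<omega>) [k+1..<Suc K]"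
      proof -
        have "?R \<omega> = map (\<lambda>j. W L j \<omega>) [k+1..<Suc K]" by (simp only: msgs_def)
        also have "\<dots> = map (?Wm \<omega>) [k+1..<Suc K]"
          by (rule list.map_cong[OF refl]) (auto simp: Wm_j J_def)
        finally show ?thesis .
      qed
      ultimately show ?thesis unfolding Zf_def by simp
    qed
    have sWm: "simple_function Mm ?Wm" by (rule simple_function_compose1[OF sWall])
    have sck: "simple_function Mm ?ck" by (rule simple_function_compose1[OF sWk])
    have sU: "simple_function Mm (\<lambda>\<omega>. ((?C \<omega>, ?R \<omega>), ?Wm \<omega>, ?ck \<omega>))" using sZ sWm sck by simp
    have sWkWm: "simple_function Mm (\<lambda>\<omega>. (?Wk \<omega>, ?Wm \<omega>))" using sWk sWm by simp
    have sWmck: "simple_function Mm (\<lambda>\<omega>. (?Wm \<omega>, ?ck \<omega>))" using sWm sck by simp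
    have ea: "ent Mm b (\<lambda>\<omega>. (?Wk \<omega>, (?C \<omega>, ?R \<omega>), ?Wm \<omega>, ?ck \<omega>)) - ent Mm b (\<lambda>\<omega>. ((?C \<omega>, ?R \<omega>), ?Wm \<omega>, ?ck \<omega>))
        \<le> ent Mm b (\<lambda>\<omega>. (?Wk \<omega>, ?C \<omega>, ?R \<omega>)) - ent Mm b ?Z"
      by (rule cond_mono[OF sWk sU, where f=fst]) simp
    have eb: "ent Mm b (\<lambda>\<omega>. (?Wk \<omega>, (?C \<omega>, ?R \<omega>), ?Wm \<omega>, ?ck \<omega>)) = ent Mm b (\<lambda>\<omega>. (?Wk \<omega>, ?Wm \<omega>))"
      by (rule ent_eq[OF sWkWm, where f="\<lambda>(w,wm). (w, Zf (take m w, wm), wm, take m w)" and g="\<lambda>(w,z,wm,c). (w,wm)"])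
         (simp_all add: eqZ)
    have ec: "ent Mm b (\<lambda>\<omega>. ((?C \<omega>, ?R \<omega>), ?Wm \<omega>, ?ck \<omega>)) = ent Mm b (\<lambda>\<omega>. (?Wm \<omega>, ?ck \<omega>))"
      by (rule ent_eq[OF sWmck, where f="\<lambda>(wm,c). (Zf (c, wm), wm, c)" and g="\<lambda>(z,wm,c). (wm,c)"])
         (simp_all add: eqZ)
    have ed: "ent Mm b (\<lambda>\<omega>. (?Wk \<omega>, ?Wm \<omega>)) = ent Mm b ?Wk + ent Mm b ?Wm"
    proof (rule ent_indep_pt[OF sWk sWm])
      fix s t
      show "prob ((\<lambda>\<omega>. (?Wk \<omega>, ?Wm \<omega>)) -` {(s, t)} \<inter> space Mm) = prob (?Wk -` {s} \<inter> space Mm) * prob (?Wm -` {t} \<inter> space Mm)"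
      proof (cases "\<forall>j. j \<notin> J \<longrightarrow> t j = []")
        case True
        have Wmt: "?Wm \<omega> = t \<longleftrightarrow> (\<forall>j\<in>J. W L j \<omega> = t j)" for \<omega>
          using True by (auto simp: fun_eq_iff Wm_j)
        have P1: "?Wm -` {t} \<inter> space Mm = (\<Inter>j\<in>J. W L j -` {t j} \<inter> space Mm)"
        proof (rule set_eqI)
          fix \<omega>
          have "\<omega> \<in> (\<Inter>j\<in>J. W L j -` {t j} \<inter> space Mm) \<longleftrightarrow> \<omega> \<in> space Mm \<and> (\<forall>j\<in>J. W L j \<omega> = t j)"
            using Jne by blast
          moreover have "\<omega> \<in> ?Wm -` {t} \<inter> space Mm \<longleftrightarrow> \<omega> \<in> space Mm \<and> (\<forall>j\<in>J. W L j \<omega> = t j)"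
            using Wmt[of \<omega>] by blast
          ultimately show "\<omega> \<in> ?Wm -` {t} \<inter> space Mm \<longleftrightarrow> \<omega> \<in> (\<Inter>j\<in>J. W L j -` {t j} \<inter> space Mm)"
            by blast
        qed
        have tk: "\<forall>j\<in>J. (t(k := s)) j = t j" using kJ by auto
        have P2: "(\<lambda>\<omega>. (?Wk \<omega>, ?Wm \<omega>)) -` {(s, t)} \<inter> space Mm = (\<Inter>j\<in>insert k J. W L j -` {(t(k := s)) j} \<inter> space Mm)"
        proof (rule set_eqI)
          fix \<omega>
          have "\<omega> \<in> (\<Inter>j\<in>insert k J. W L j -` {(t(k := s)) j} \<inter> space Mm) \<longleftrightarrow>
              \<omega> \<in> space Mm \<and> W L k \<omega> = s \<and> (\<forall>j\<in>J. W L j \<omega> = t j)"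
            using tk by auto
          moreover have "\<omega> \<in> (\<lambda>\<omega>. (?Wk \<omega>, ?Wm \<omega>)) -` {(s, t)} \<inter> space Mm \<longleftrightarrow>
              \<omega> \<in> space Mm \<and> W L k \<omega> = s \<and> (\<forall>j\<in>J. W L j \<omega> = t j)"
            using Wmt[of \<omega>] by auto
          ultimately show "\<omega> \<in> (\<lambda>\<omega>. (?Wk \<omega>, ?Wm \<omega>)) -` {(s, t)} \<inter> space Mm \<longleftrightarrow> \<omega> \<in> (\<Inter>j\<in>insert k J. W L j -` {(t(k := s)) j} \<inter> space Mm)"
            by blast
        qed
        have I1: "prob (\<Inter>j\<in>J. W L j -` {t j} \<inter> space Mm) = (\<Prod>j\<in>J. prob (W L j -` {t j} \<inter> space Mm))"
          by (rule indep_varsD[OF W_indep]) (use Jne finJ JK in auto)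
        have I2: "prob (\<Inter>j\<in>insert k J. W L j -` {(t(k := s)) j} \<inter> space Mm) = (\<Prod>j\<in>insert k J. prob (W L j -` {(t(k := s)) j} \<inter> space Mm))"
          by (rule indep_varsD[OF W_indep]) (use finJ JK k1 kK in auto)
        have "(\<Prod>j\<in>insert k J. prob (W L j -` {(t(k := s)) j} \<inter> space Mm)) = prob (?Wk -` {s} \<inter> space Mm) * (\<Prod>j\<in>J. prob (W L j -` {t j} \<inter> space Mm))"
        proof -
          have "(\<Prod>j\<in>J. prob (W L j -` {(t(k := s)) j} \<inter> space Mm)) = (\<Prod>j\<in>J. prob (W L j -` {t j} \<inter> space Mm))"
            by (rule prod.cong) (use kJ in auto)
          then show ?thesis using finJ kJ by simp
        qed
        then show ?thesis unfolding P1 P2 I1 I2 by simp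
      next
        case False
        then obtain j where j: "j \<notin> J" "t j \<noteq> []" by auto
        have "?Wm \<omega> \<noteq> t" for \<omega> using j by (auto simp: fun_eq_iff Wm_j)
        then have "?Wm -` {t} \<inter> space Mm = {}" "(\<lambda>\<omega>. (?Wk \<omega>, ?Wm \<omega>)) -` {(s, t)} \<inter> space Mm = {}" by auto
        then show ?thesis by simp
      qed
    qed
    have ee: "ent Mm b (\<lambda>\<omega>. (?Wm \<omega>, ?ck \<omega>)) \<le> ent Mm b ?Wm + ent Mm b ?ck"
      by (rule subadd[OF sWm sck])
    have ef: "ent Mm b ?ck \<le> real m"
    proof -
      let ?S = "{xs :: 's list. set xs \<subseteq> UNIV \<and> length xs = min m L}"
      have "?ck ` space Mm \<subseteq> ?S" using W_len[of k] k1 kK by auto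
      moreover have "finite ?S" by (rule finite_lists_length_eq) simp
      ultimately have "ent Mm b ?ck \<le> log b (real (card ?S))" by (rule ent_card[OF sck])
      also have "card ?S = CARD('s) ^ min m L" by (rule card_lists_length_eq) simp
      also have "log b (real (CARD('s) ^ min m L)) = real (min m L)"
        using b_gt_1 by (simp add: bdef log_nat_power)
      finally show ?thesis by simp
    qed
    have eg: "ent Mm b (\<lambda>\<omega>. (?Wk \<omega>, (?q k \<omega>, ?a k \<omega>), ?C \<omega>, ?R \<omega>)) - ent Mm b (\<lambda>\<omega>. ((?q k \<omega>, ?a k \<omega>), ?C \<omega>, ?R \<omega>))
        \<le> ent Mm b (\<lambda>\<omega>. (?Wk \<omega>, ?C \<omega>, ?q k \<omega>, ?a k \<omega>)) - ent Mm b (\<lambda>\<omega>. (?C \<omega>, ?q k \<omega>, ?a k \<omega>))"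
      by (rule cond_mono[OF sWk, where f="\<lambda>((qs,as),c,r). (c,qs,as)"]) (use sY[OF kin] sZ in simp_all)
    have ce: "cent Mm b ?Wk (\<lambda>\<omega>. (?C \<omega>, ?q k \<omega>, ?a k \<omega>)) = ent Mm b (\<lambda>\<omega>. (?Wk \<omega>, ?C \<omega>, ?q k \<omega>, ?a k \<omega>)) - ent Mm b (\<lambda>\<omega>. (?C \<omega>, ?q k \<omega>, ?a k \<omega>))"
      by (rule cent_ent[OF sWk]) (use sC sY[OF kin] in simp)
    show ?thesis
      unfolding cmi_ent[OF sWk sY[OF kin] sZ] ce using ea eb ec ed ee ef eg W_ent by simp
  qed

  have stepf: "real m \<le> real L * r k"
  proof -
    have "0 \<le> r k" using rr[of k] r0[of k] k1 by (cases "k \<le> Mc") auto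
    then have "0 \<le> real L * r k" by simp
    then show ?thesis unfolding m_def mm_def by linarith
  qed

  let ?LHS = "cmi Mm b ?X (?Y (k+1)) ?Z"
  have "real N * ?LHS = (\<Sum>n\<in>{1..N}. ?LHS)" by simp
  also have "\<dots> \<ge> (\<Sum>n\<in>{1..N}. cmi Mm b ?X (\<lambda>\<omega>. (?qn k n \<omega>, ?an k n \<omega>)) ?Z)"
    by (rule sum_mono) (rule stepab)
  finally have "real N * ?LHS \<ge> cmi Mm b ?X1 (?Y k) ?Z2 + real L * (1 - r k)
      - cent Mm b ?Wk (\<lambda>\<omega>. (?C \<omega>, ?q k \<omega>, ?a k \<omega>))"
    using stepc stepd stepe stepf by (simp add: algebra_simps)
  then show ?thesis by (intro final_alg) (use N_pos in auto)
qed


declare One_nat_def[simp]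

theorem lemma2:
  fixes Mp :: "nat \<Rightarrow> 'a measure"
    and W :: "nat \<Rightarrow> nat \<Rightarrow> 'a \<Rightarrow> 's::finite list"
    and Q :: "nat \<Rightarrow> nat \<Rightarrow> nat set \<Rightarrow> nat \<Rightarrow> 'a \<Rightarrow> 'qu"
    and A :: "nat \<Rightarrow> nat \<Rightarrow> nat set \<Rightarrow> nat \<Rightarrow> 'a \<Rightarrow> 'an"
    and r :: "nat \<Rightarrow> real"
    and N K M k :: nat
  defines "b \<equiv> real CARD('s)"
  assumes alphabet: "CARD('s) \<ge> 2"
    and N_pos: "N \<ge> 1"
    and M_le: "M \<le> K"
    and r_range: "\<And>i. i \<in> {1..M} \<Longrightarrow> 0 \<le> r i \<and> r i \<le> 1"
    and r_zero: "\<And>i. i > M \<Longrightarrow> r i = 0"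
    and prob: "\<And>L. prob_space (Mp L)"
    and W_sf: "\<And>L j. j \<in> {1..K} \<Longrightarrow> simple_function (Mp L) (W L j)"
    and W_len: "\<And>L j \<omega>. j \<in> {1..K} \<Longrightarrow> \<omega> \<in> space (Mp L) \<Longrightarrow> length (W L j \<omega>) = L"
    and W_ent: "\<And>L j. j \<in> {1..K} \<Longrightarrow> ent (Mp L) b (W L j) = real L"
    and W_indep: "\<And>L. prob_space.indep_vars (Mp L) (\<lambda>_. count_space UNIV) (W L) {1..K}"
    and Q_sf: "\<And>L \<theta> h n. \<theta> \<in> {1..K} \<Longrightarrow> h \<subseteq> {1..K} \<Longrightarrow> card h = M \<Longrightarrow> n \<in> {1..N} \<Longrightarrow>
                 simple_function (Mp L) (Q L \<theta> h n)"
    and A_sf: "\<And>L \<theta> h n. \<theta> \<in> {1..K} \<Longrightarrow> h \<subseteq> {1..K} \<Longrightarrow> card h = M \<Longrightarrow> n \<in> {1..N} \<Longrightarrow>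
                 simple_function (Mp L) (A L \<theta> h n)"
    and Q_indep: "\<And>L \<theta> h. \<theta> \<in> {1..K} \<Longrightarrow> h \<subseteq> {1..K} \<Longrightarrow> card h = M \<Longrightarrow>
                 (\<forall>X Y. measure (Mp L) {\<omega> \<in> space (Mp L). qlist Q L \<theta> h N \<omega> \<in> X \<and> msgs W L 1 K \<omega> \<in> Y}
                   = measure (Mp L) {\<omega> \<in> space (Mp L). qlist Q L \<theta> h N \<omega> \<in> X}
                     * measure (Mp L) {\<omega> \<in> space (Mp L). msgs W L 1 K \<omega> \<in> Y})"
    and A_det: "\<And>L \<theta> h n. \<theta> \<in> {1..K} \<Longrightarrow> h \<subseteq> {1..K} \<Longrightarrow> card h = M \<Longrightarrow> n \<in> {1..N} \<Longrightarrow>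
                 cent (Mp L) b (A L \<theta> h n) (\<lambda>\<omega>. (Q L \<theta> h n \<omega>, msgs W L 1 K \<omega>)) = 0"
    and reliable: "\<And>\<theta>. \<theta> \<in> {1..K} \<Longrightarrow>
                 (\<lambda>L. cent (Mp L) b (W L \<theta>)
                    (\<lambda>\<omega>. (cache W r M L \<omega>, qlist Q L \<theta> {1..M} N \<omega>, qlist A L \<theta> {1..M} N \<omega>)))
                 \<in> o(\<lambda>L. real L)"
    and privacy: "\<And>L \<theta> \<theta>' h h' n. \<theta> \<in> {1..K} \<Longrightarrow> \<theta>' \<in> {1..K} \<Longrightarrow>
                 h \<subseteq> {1..K} \<Longrightarrow> card h = M \<Longrightarrow> h' \<subseteq> {1..K} \<Longrightarrow> card h' = M \<Longrightarrow> n \<in> {1..N} \<Longrightarrow>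
                 distr (Mp L) (count_space UNIV) (\<lambda>\<omega>. (Q L \<theta> h n \<omega>, A L \<theta> h n \<omega>, msgs W L 1 K \<omega>))
                 = distr (Mp L) (count_space UNIV) (\<lambda>\<omega>. (Q L \<theta>' h' n \<omega>, A L \<theta>' h' n \<omega>, msgs W L 1 K \<omega>))"
    and k_range: "k \<in> {1..K - 1}"
  shows "\<exists>f. f \<in> o(\<lambda>L. real L) \<and> (\<forall>L.
           cmi (Mp L) b (msgs W L 1 k)
               (\<lambda>\<omega>. (qlist Q L (k + 1) {1..M} N \<omega>, qlist A L (k + 1) {1..M} N \<omega>))
               (\<lambda>\<omega>. (cache W r M L \<omega>, msgs W L (k + 1) K \<omega>))
           \<ge> 1 / real N *
             cmi (Mp L) b (msgs W L 1 (k - 1))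
               (\<lambda>\<omega>. (qlist Q L k {1..M} N \<omega>, qlist A L k {1..M} N \<omega>))
               (\<lambda>\<omega>. (cache W r M L \<omega>, msgs W L k K \<omega>))
             + real L / real N * (1 - r k) - f L)"
proof -
  have k1: "1 \<le> k" and kK: "k < K" using k_range by auto
  have N0: "real N \<noteq> 0" using N_pos by simp
  define f where "f L = cent (Mp L) b (W L k) (\<lambda>\<omega>. (cache W r M L \<omega>, qlist Q L k {1..M} N \<omega>, qlist A L k {1..M} N \<omega>)) / real N" for L
  have fo: "f \<in> o(\<lambda>L. real L)"
  proof -
    have "(\<lambda>L. cent (Mp L) b (W L k) (\<lambda>\<omega>. (cache W r M L \<omega>, qlist Q L k {1..M} N \<omega>, qlist A L k {1..M} N \<omega>))) \<in> o(\<lambda>L. real L)"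
      by (rule reliable) (use k1 kK in auto)
    then show ?thesis unfolding f_def[abs_def] using N0 by simp
  qed
  have hM: "{1..M} \<subseteq> {1..K}" "card {1..M} = M" using M_le by auto
  have kin: "\<theta> \<in> {k, k+1} \<Longrightarrow> \<theta> \<in> {1..K}" for \<theta> using k1 kK by auto
  have main: "cmi (Mp L) b (msgs W L 1 k)
               (\<lambda>\<omega>. (qlist Q L (k + 1) {1..M} N \<omega>, qlist A L (k + 1) {1..M} N \<omega>))
               (\<lambda>\<omega>. (cache W r M L \<omega>, msgs W L (k + 1) K \<omega>))
           \<ge> 1 / real N *
             cmi (Mp L) b (msgs W L 1 (k - 1))
               (\<lambda>\<omega>. (qlist Q L k {1..M} N \<omega>, qlist A L k {1..M} N \<omega>))
               (\<lambda>\<omega>. (cache W r M L \<omega>, msgs W L k K \<omega>))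
             + real L / real N * (1 - r k) - f L" for L
    unfolding f_def
  proof (rule per_L)
    show "information_space (Mp L) b"
      unfolding information_space_def information_space_axioms_def using prob[of L] alphabet b_def by auto
    show "b = real CARD('s)" by (simp add: b_def)
    show "N \<ge> 1" "M \<le> K" "1 \<le> k" "k < K" by (fact N_pos M_le k1 kK)+
    show "\<And>i. i \<in> {1..M} \<Longrightarrow> 0 \<le> r i" using r_range by auto
    show "\<And>i. i > M \<Longrightarrow> r i = 0" by (rule r_zero)
    show "\<And>j. j \<in> {1..K} \<Longrightarrow> simple_function (Mp L) (W L j)" by (rule W_sf)
    show "\<And>j \<omega>. j \<in> {1..K} \<Longrightarrow> \<omega> \<in> space (Mp L) \<Longrightarrow> length (W L j \<omega>) = L" by (rule W_len)
    show "ent (Mp L) b (W L k) = real L" by (rule W_ent) (use k1 kK in auto)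
    show "prob_space.indep_vars (Mp L) (\<lambda>_. count_space UNIV) (W L) {1..K}" by (rule W_indep)
    show "\<And>\<theta> n. \<theta> \<in> {k, k+1} \<Longrightarrow> n \<in> {1..N} \<Longrightarrow> simple_function (Mp L) (Q L \<theta> {1..M} n)"
      using Q_sf kin hM by blast
    show "\<And>\<theta> n. \<theta> \<in> {k, k+1} \<Longrightarrow> n \<in> {1..N} \<Longrightarrow> simple_function (Mp L) (A L \<theta> {1..M} n)"
      using A_sf kin hM by blast
    show "\<forall>X Y. measure (Mp L) {\<omega> \<in> space (Mp L). qlist Q L k {1..M} N \<omega> \<in> X \<and> msgs W L 1 K \<omega> \<in> Y}
                   = measure (Mp L) {\<omega> \<in> space (Mp L). qlist Q L k {1..M} N \<omega> \<in> X}
                     * measure (Mp L) {\<omega> \<in> space (Mp L). msgs W L 1 K \<omega> \<in> Y}"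
      by (rule Q_indep) (use k1 kK hM in auto)
    show "\<And>n. n \<in> {1..N} \<Longrightarrow>
                 cent (Mp L) b (A L k {1..M} n) (\<lambda>\<omega>. (Q L k {1..M} n \<omega>, msgs W L 1 K \<omega>)) = 0"
      by (rule A_det) (use k1 kK hM in auto)
    show "\<And>n. n \<in> {1..N} \<Longrightarrow>
                 distr (Mp L) (count_space UNIV) (\<lambda>\<omega>. (Q L (k+1) {1..M} n \<omega>, A L (k+1) {1..M} n \<omega>, msgs W L 1 K \<omega>))
                 = distr (Mp L) (count_space UNIV) (\<lambda>\<omega>. (Q L k {1..M} n \<omega>, A L k {1..M} n \<omega>, msgs W L 1 K \<omega>))"
      by (rule privacy) (use k1 kK hM in auto)
  qed
  show ?thesis using fo main by blast
qed

end
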